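(* Fix $k\in\mathbb{N}$ and let $\alpha=\alpha(n)\in(0,\infty)$. If $\alpha\to\infty$ and $\alpha/\sqrt{n}\to 0$ as $n\to\infty$, then $d_{TV}(M_{n,k}^{\alpha},M_{n,k}^{\infty})\to 1$ as $n\to\infty$.
   Context: A $k$-out map on $[n]$ is a map $M:[n]\to[n]^k$, viewed as a digraph on $[n]$ in which each vertex has $k$ out-arcs labeled $1,\dots,k$; $\mathcal{M}_{n,k}$ denotes the set of all such maps. The in-degree $d_j$ of vertex $j$ is the total number of coordinates, over all vertices $i$ and all $k$ labels, of $M(i)$ equal to $j$ (so $d_1+\dots+d_n=kn$). For $\alpha\in(0,\infty)$, the random $k$-out map $M_{n,k}^{\alpha}$ is generated by inserting $kn$ out-arcs, $k$ per vertex: every vertex starts with weight $\alpha$; at each step a vertex whose out-degree is below $k$ picks its next image $j$ with probability proportional to the current weight of $j$, and the weight of $j$ then increases by $1$. Its law is $P(M_{n,k}^{\alpha}=M)=\prod_{j=1}^n \alpha^{\overline{d_j}}/(\alpha n)^{\overline{kn}}$, where $(d_1,\dots,d_n)$ is the in-degree sequence of $M$ and $x^{\overline{y}}=x(x+1)\cdots(x+y-1)$. $M_{n,k}^{\infty}$ denotes the uniformly random element of $\mathcal{M}_{n,k}$ (probability $n^{-kn}$ each). $d_{TV}(M_{n,k}^{\alpha},M_{n,k}^{\infty})=\sup_{\mathcal{A}\subseteq\mathcal{M}_{n,k}}|P(M_{n,k}^{\alpha}\in\mathcal{A})-P(M_{n,k}^{\infty}\in\mathcal{A})|$. *)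

theory Defs
  imports "HOL-Analysis.Analysis"
begin

text \<open>k-out maps on [n] = {1..n}: M i l is the l-th image of vertex i
  (i in {1..n}, l in {1..k}); extensional outside this domain.\<close>
definition kout_maps :: "nat \<Rightarrow> nat \<Rightarrow> (nat \<Rightarrow> nat \<Rightarrow> nat) set" where
  "kout_maps n k = ({1..n} \<rightarrow>\<^sub>E ({1..k} \<rightarrow>\<^sub>E {1..n}))"

definition indeg :: "nat \<Rightarrow> nat \<Rightarrow> (nat \<Rightarrow> nat \<Rightarrow> nat) \<Rightarrow> nat \<Rightarrow> nat" where
  "indeg n k M j = card {(i, l). i \<in> {1..n} \<and> l \<in> {1..k} \<and> M i l = j}"

text \<open>Law of the random k-out map with parameter alpha
  (pochhammer x y = rising factorial x(x+1)...(x+y-1)).\<close>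
definition prob_alpha :: "nat \<Rightarrow> nat \<Rightarrow> real \<Rightarrow> (nat \<Rightarrow> nat \<Rightarrow> nat) \<Rightarrow> real" where
  "prob_alpha n k \<alpha> M =
     (\<Prod>j\<in>{1..n}. pochhammer \<alpha> (indeg n k M j)) / pochhammer (\<alpha> * real n) (k * n)"

definition prob_unif :: "nat \<Rightarrow> nat \<Rightarrow> (nat \<Rightarrow> nat \<Rightarrow> nat) \<Rightarrow> real" where
  "prob_unif n k M = 1 / real n ^ (k * n)"

definition dTV :: "nat \<Rightarrow> nat \<Rightarrow> real \<Rightarrow> real" where
  "dTV n k \<alpha> = Sup {\<bar>(\<Sum>M\<in>A. prob_alpha n k \<alpha> M) - (\<Sum>M\<in>A. prob_unif n k M)\<bar> | A.
                       A \<subseteq> kout_maps n k}"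

end

theory Submission
  imports Defs
begin

definition cnt :: "'s set \<Rightarrow> ('s \<Rightarrow> nat) \<Rightarrow> nat \<Rightarrow> nat" where
  "cnt S f j = card {s\<in>S. f s = j}"

lemma sum_cnt:
  assumes "finite S" "finite V" "f \<in> S \<rightarrow>\<^sub>E V"
  shows "(\<Sum>j\<in>V. cnt S f j) = card S"
proof -
  have "(\<Sum>j\<in>V. cnt S f j) = (\<Sum>j\<in>V. \<Sum>s\<in>{s\<in>S. f s = j}. 1)"
    by (simp add: cnt_def)
  also have "\<dots> = (\<Sum>s\<in>S. 1)"
    by (rule sum.group) (use assms in auto)
  finally show ?thesis by simp
qed

lemma cnt_upd:
  assumes "s \<notin> S" "finite S"
  shows "cnt (insert s S) (g(s:=y)) j = cnt S g j + (if y = j then 1 else 0)"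
proof -
  have e: "{x \<in> insert s S. (g(s:=y)) x = j} = (if y = j then insert s {x\<in>S. g x = j} else {x\<in>S. g x = j})"
    using assms by auto
  show ?thesis unfolding cnt_def e using assms by auto
qed

lemma prod_bump:
  fixes x :: "nat \<Rightarrow> real"
  assumes "finite V" "y \<in> V"
  shows "(\<Prod>j\<in>V. pochhammer (x j) (c j + (if y = j then 1 else 0)))
       = (\<Prod>j\<in>V. pochhammer (x j) (c j)) * (x y + c y)"
proof -
  have "(\<Prod>j\<in>V. pochhammer (x j) (c j + (if y = j then 1 else 0)))
      = (\<Prod>j\<in>V. pochhammer (x j) (c j) * (if j = y then x j + c j else 1))"
    by (rule prod.cong) (auto simp: pochhammer_Suc)
  also have "\<dots> = (\<Prod>j\<in>V. pochhammer (x j) (c j)) * (\<Prod>j\<in>V. (if j = y then x j + c j else 1))"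
    by (rule prod.distrib)
  also have "(\<Prod>j\<in>V. (if j = y then x j + c j else 1)) = x y + c y"
    using assms by (simp add: prod.delta)
  finally show ?thesis .
qed

lemma polya_id:
  fixes x :: "nat \<Rightarrow> real"
  assumes "finite S" "finite V"
  shows "(\<Sum>f\<in>S \<rightarrow>\<^sub>E V. \<Prod>j\<in>V. pochhammer (x j) (cnt S f j)) = pochhammer (\<Sum>j\<in>V. x j) (card S)"
  using assms(1)
proof (induction S rule: finite_induct)
  case empty
  then show ?case by (simp add: cnt_def)
next
  case (insert s S)
  let ?X = "\<Sum>j\<in>V. x j"
  have "(\<Sum>f\<in>insert s S \<rightarrow>\<^sub>E V. \<Prod>j\<in>V. pochhammer (x j) (cnt (insert s S) f j))
      = (\<Sum>p\<in>V \<times> (S \<rightarrow>\<^sub>E V). \<Prod>j\<in>V. pochhammer (x j) (cnt (insert s S) ((\<lambda>(y, g). g(s := y)) p) j))"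
    unfolding PiE_insert_eq
    by (subst sum.reindex) (use inj_combinator[OF insert(2), of "\<lambda>_. V"] in auto)
  also have "\<dots> = (\<Sum>y\<in>V. \<Sum>g\<in>S \<rightarrow>\<^sub>E V. \<Prod>j\<in>V. pochhammer (x j) (cnt S g j + (if y = j then 1 else 0)))"
    unfolding sum.cartesian_product
    by (rule sum.cong) (auto simp: cnt_upd insert)
  also have "\<dots> = (\<Sum>y\<in>V. \<Sum>g\<in>S \<rightarrow>\<^sub>E V. (\<Prod>j\<in>V. pochhammer (x j) (cnt S g j)) * (x y + cnt S g y))"
    by (simp add: prod_bump assms)
  also have "\<dots> = (\<Sum>g\<in>S \<rightarrow>\<^sub>E V. (\<Prod>j\<in>V. pochhammer (x j) (cnt S g j)) * (\<Sum>y\<in>V. (x y + cnt S g y)))"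
    by (subst sum.swap) (simp add: sum_distrib_left)
  also have "\<dots> = (\<Sum>g\<in>S \<rightarrow>\<^sub>E V. (\<Prod>j\<in>V. pochhammer (x j) (cnt S g j)) * (?X + card S))"
  proof (rule sum.cong)
    fix g assume g: "g \<in> S \<rightarrow>\<^sub>E V"
    have "(\<Sum>y\<in>V. real (cnt S g y)) = real (card S)"
      using sum_cnt[OF insert(1) assms(2) g] by (metis of_nat_sum)
    then show "(\<Prod>j\<in>V. pochhammer (x j) (cnt S g j)) * (\<Sum>y\<in>V. (x y + cnt S g y)) =
          (\<Prod>j\<in>V. pochhammer (x j) (cnt S g j)) * (?X + card S)"
      by (simp add: sum.distrib)
  qed simp
  also have "\<dots> = pochhammer ?X (card S) * (?X + card S)"
    by (simp add: sum_distrib_right[symmetric] insert)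
  also have "\<dots> = pochhammer ?X (card (insert s S))"
    using insert by (simp add: pochhammer_Suc)
  finally show ?case .
qed

lemma polya_shift:
  fixes x :: "nat \<Rightarrow> real" and r :: "nat \<Rightarrow> nat"
  assumes "finite S" "finite V"
  shows "(\<Sum>f\<in>S \<rightarrow>\<^sub>E V. \<Prod>j\<in>V. pochhammer (x j) (cnt S f j) * pochhammer (x j + cnt S f j) (r j))
       = (\<Prod>j\<in>V. pochhammer (x j) (r j)) * pochhammer (\<Sum>j\<in>V. x j + r j) (card S)"
proof -
  have e: "pochhammer (x j) (cnt S f j) * pochhammer (x j + cnt S f j) (r j)
        = pochhammer (x j) (r j) * pochhammer (x j + r j) (cnt S f j)" for f j
    by (metis pochhammer_product' add.commute)
  have "(\<Sum>f\<in>S \<rightarrow>\<^sub>E V. \<Prod>j\<in>V. pochhammer (x j) (cnt S f j) * pochhammer (x j + cnt S f j) (r j))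
      = (\<Sum>f\<in>S \<rightarrow>\<^sub>E V. (\<Prod>j\<in>V. pochhammer (x j) (r j)) * (\<Prod>j\<in>V. pochhammer (x j + r j) (cnt S f j)))"
    by (simp add: e prod.distrib)
  also have "\<dots> = (\<Prod>j\<in>V. pochhammer (x j) (r j)) * (\<Sum>f\<in>S \<rightarrow>\<^sub>E V. (\<Prod>j\<in>V. pochhammer (x j + r j) (cnt S f j)))"
    by (simp add: sum_distrib_left)
  also have "\<dots> = (\<Prod>j\<in>V. pochhammer (x j) (r j)) * pochhammer (\<Sum>j\<in>V. x j + r j) (card S)"
    using polya_id[OF assms, of "\<lambda>j. x j + r j"] by simp
  finally show ?thesis .
qed

definition W :: "'s set \<Rightarrow> nat \<Rightarrow> real \<Rightarrow> ('s \<Rightarrow> nat) \<Rightarrow> real" where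
  "W S n a f = (\<Prod>j\<in>{1..n}. pochhammer a (cnt S f j))"

lemma prod_two:
  fixes h :: "nat \<Rightarrow> nat \<Rightarrow> real"
  assumes "finite V" "j1 \<in> V" "j2 \<in> V" "j1 \<noteq> j2" "\<And>j. h j 0 = 1"
  shows "(\<Prod>j\<in>V. h j (if j = j1 then s else if j = j2 then t else 0)) = h j1 s * h j2 t"
proof -
  have "(\<Prod>j\<in>V. h j (if j = j1 then s else if j = j2 then t else 0))
     = (\<Prod>j\<in>V. (if j = j1 then h j1 s else 1) * (if j = j2 then h j2 t else 1))"
    by (rule prod.cong) (use assms in auto)
  also have "\<dots> = h j1 s * h j2 t"
    using assms by (simp add: prod.distrib prod.delta)
  finally show ?thesis .
qed

lemma prod_one:
  fixes h :: "nat \<Rightarrow> nat \<Rightarrow> real"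
  assumes "finite V" "j1 \<in> V" "\<And>j. h j 0 = 1"
  shows "(\<Prod>j\<in>V. h j (if j = j1 then s else 0)) = h j1 s"
proof -
  have "(\<Prod>j\<in>V. h j (if j = j1 then s else 0))
     = (\<Prod>j\<in>V. (if j = j1 then h j1 s else 1))"
    by (rule prod.cong) (use assms in auto)
  also have "\<dots> = h j1 s"
    using assms by (simp add: prod.delta)
  finally show ?thesis .
qed

lemma mom_pair:
  assumes "finite S" "j1 \<in> {1..n}" "j2 \<in> {1..n}" "j1 \<noteq> j2"
  shows "(\<Sum>f\<in>S \<rightarrow>\<^sub>E {1..n}. W S n a f * (pochhammer (a + cnt S f j1) s * pochhammer (a + cnt S f j2) t))
       = pochhammer a s * pochhammer a t * pochhammer (a * n + s + t) (card S)"
proof -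
  let ?r = "\<lambda>j. if j = j1 then s else if j = j2 then t else 0"
  have 1: "(\<Prod>j\<in>{1..n}. pochhammer a (cnt S f j) * pochhammer (a + cnt S f j) (?r j))
     = W S n a f * (pochhammer (a + cnt S f j1) s * pochhammer (a + cnt S f j2) t)" for f
    unfolding W_def prod.distrib
    by (subst prod_two[where h = "\<lambda>j k. pochhammer (a + cnt S f j) k"]) (use assms in auto)
  have 2: "(\<Prod>j\<in>{1..n}. pochhammer a (?r j)) = pochhammer a s * pochhammer a t"
    by (rule prod_two[where h = "\<lambda>j k. pochhammer a k"]) (use assms in auto)
  have 3: "(\<Sum>j\<in>{1..n}. a + real (?r j)) = a * n + s + t"
  proof -
    have "(\<Sum>j\<in>{1..n}. a + real (?r j)) = (\<Sum>j\<in>{1..n}. a + ((if j = j1 then real s else 0) + (if j = j2 then real t else 0)))"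
      by (rule sum.cong) (use assms in auto)
    also have "\<dots> = a * n + s + t"
      using assms by (simp add: sum.distrib sum.delta)
    finally show ?thesis .
  qed
  show ?thesis
    using polya_shift[OF assms(1) finite_atLeastAtMost[of 1 n], of "\<lambda>_. a" ?r]
    unfolding 1 2 3 by simp
qed

lemma mom_one:
  assumes "finite S" "j1 \<in> {1..n}"
  shows "(\<Sum>f\<in>S \<rightarrow>\<^sub>E {1..n}. W S n a f * pochhammer (a + cnt S f j1) s)
       = pochhammer a s * pochhammer (a * n + s) (card S)"
proof -
  let ?r = "\<lambda>j. if j = j1 then s else 0"
  have 1: "(\<Prod>j\<in>{1..n}. pochhammer a (cnt S f j) * pochhammer (a + cnt S f j) (?r j))
     = W S n a f * pochhammer (a + cnt S f j1) s" for f
    unfolding W_def prod.distrib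
    by (subst prod_one[where h = "\<lambda>j k. pochhammer (a + cnt S f j) k"]) (use assms in auto)
  have 2: "(\<Prod>j\<in>{1..n}. pochhammer a (?r j)) = pochhammer a s"
    by (rule prod_one[where h = "\<lambda>j k. pochhammer a k"]) (use assms in auto)
  have 3: "(\<Sum>j\<in>{1..n}. a + real (?r j)) = a * n + s"
  proof -
    have "(\<Sum>j\<in>{1..n}. a + real (?r j)) = (\<Sum>j\<in>{1..n}. a + (if j = j1 then real s else 0))"
      by (rule sum.cong) (use assms in auto)
    also have "\<dots> = a * n + s"
      using assms by (simp add: sum.distrib sum.delta)
    finally show ?thesis .
  qed
  show ?thesis
    using polya_shift[OF assms(1) finite_atLeastAtMost[of 1 n], of "\<lambda>_. a" ?r]
    unfolding 1 2 3 by simp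
qed

lemma sumW:
  assumes "finite S"
  shows "(\<Sum>f\<in>S \<rightarrow>\<^sub>E {1..n}. W S n a f) = pochhammer (a * n) (card S)"
  using polya_id[OF assms finite_atLeastAtMost[of 1 n], of "\<lambda>_. a"] unfolding W_def
  by (simp add: mult.commute)

lemma p2: "pochhammer (x::real) 2 = x*(x+1)" by (simp add: pochhammer_Suc eval_nat_numeral)
lemma p3: "pochhammer (x::real) 3 = x*(x+1)*(x+2)" by (simp add: pochhammer_Suc eval_nat_numeral)
lemma p4: "pochhammer (x::real) 4 = x*(x+1)*(x+2)*(x+3)" by (simp add: pochhammer_Suc eval_nat_numeral)

definition F2 :: "real \<Rightarrow> real" where "F2 y = y*(y-1)"
definition F3 :: "real \<Rightarrow> real" where "F3 y = y*(y-1)*(y-2)"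
definition F4 :: "real \<Rightarrow> real" where "F4 y = y*(y-1)*(y-2)*(y-3)"

lemma poch_split:
  fixes X :: real
  assumes "s \<le> r"
  shows "pochhammer (X + s) m * pochhammer X r = pochhammer X m * pochhammer (X + m) s * pochhammer (X + s) (r - s)"
proof -
  have "pochhammer X r = pochhammer X s * pochhammer (X + s) (r - s)"
    using pochhammer_product'[of X s "r - s"] assms by simp
  moreover have "pochhammer X s * pochhammer (X + s) m = pochhammer X m * pochhammer (X + m) s"
    by (metis pochhammer_product' add.commute)
  ultimately show ?thesis by (simp add: algebra_simps)
qed

lemma momF4:
  assumes "finite S" "j \<in> {1..n}"
  shows "(\<Sum>f\<in>S \<rightarrow>\<^sub>E {1..n}. W S n a f * F4 (cnt S f j)) * pochhammer (a*n) 4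
       = pochhammer a 4 * F4 (card S) * pochhammer (a*n) (card S)"
proof -
  define X where "X = a * real n"
  define Z where "Z = pochhammer X (card S)"
  define m where "m = real (card S)"
  define c0 where "c0 = a*(a+1)*(a+2)*(a+3)"
  define c1 where "c1 = - 4*(a+1)*(a+2)*(a+3)"
  define c2 where "c2 = 6*(a+2)*(a+3)"
  define c3 where "c3 = - 4*(a+3)"
  let ?u = "\<lambda>s f. pochhammer (a + cnt S f j) s"
  let ?M = "\<lambda>s. \<Sum>f\<in>S \<rightarrow>\<^sub>E {1..n}. W S n a f * ?u s f"
  have pt: "F4 (cnt S f j) = c0 + c1 * ?u 1 f + c2 * ?u 2 f + c3 * ?u 3 f + ?u 4 f" for f
    unfolding F4_def c0_def c1_def c2_def c3_def p2 p3 p4 pochhammer_1 by algebra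
  have "(\<Sum>f\<in>S \<rightarrow>\<^sub>E {1..n}. W S n a f * F4 (cnt S f j))
     = c0 * (\<Sum>f\<in>S \<rightarrow>\<^sub>E {1..n}. W S n a f) + c1 * ?M 1 + c2 * ?M 2 + c3 * ?M 3 + ?M 4"
    unfolding pt by (simp add: sum.distrib sum_distrib_left algebra_simps)
  also have "\<dots> = c0 * pochhammer X (card S) + c1 * (pochhammer a 1 * pochhammer (X + 1) (card S))
       + c2 * (pochhammer a 2 * pochhammer (X + 2) (card S))
       + c3 * (pochhammer a 3 * pochhammer (X + 3) (card S))
       + (pochhammer a 4 * pochhammer (X + 4) (card S))"
    using mom_one[OF assms, of a 1] mom_one[OF assms, of a 2] mom_one[OF assms, of a 3]
      mom_one[OF assms, of a 4] sumW[OF assms(1), of n a] unfolding X_def by simp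
  finally have e: "(\<Sum>f\<in>S \<rightarrow>\<^sub>E {1..n}. W S n a f * F4 (cnt S f j)) = \<dots>" .
  have s0: "pochhammer X (card S) * pochhammer X 4 = Z * pochhammer X 4" by (simp add: Z_def)
  have s1: "pochhammer (X + 1) (card S) * pochhammer X 4 = Z * (X + m) * pochhammer (X + 1) 3"
    using poch_split[of 1 4 X "card S"] by (simp add: Z_def m_def)
  have s2: "pochhammer (X + 2) (card S) * pochhammer X 4 = Z * pochhammer (X + m) 2 * pochhammer (X + 2) 2"
    using poch_split[of 2 4 X "card S"] by (simp add: Z_def m_def)
  have s3: "pochhammer (X + 3) (card S) * pochhammer X 4 = Z * pochhammer (X + m) 3 * (X + 3)"
    using poch_split[of 3 4 X "card S"] by (simp add: Z_def m_def)
  have s4: "pochhammer (X + 4) (card S) * pochhammer X 4 = Z * pochhammer (X + m) 4"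
    using poch_split[of 4 4 X "card S"] by (simp add: Z_def m_def)
  have "(c0 * pochhammer X (card S) + c1 * (pochhammer a 1 * pochhammer (X + 1) (card S))
       + c2 * (pochhammer a 2 * pochhammer (X + 2) (card S))
       + c3 * (pochhammer a 3 * pochhammer (X + 3) (card S))
       + (pochhammer a 4 * pochhammer (X + 4) (card S))) * pochhammer X 4
     = c0 * (pochhammer X (card S) * pochhammer X 4) + c1 * a * (pochhammer (X + 1) (card S) * pochhammer X 4)
       + c2 * pochhammer a 2 * (pochhammer (X + 2) (card S) * pochhammer X 4)
       + c3 * pochhammer a 3 * (pochhammer (X + 3) (card S) * pochhammer X 4)
       + pochhammer a 4 * (pochhammer (X + 4) (card S) * pochhammer X 4)"
    by (simp add: algebra_simps)
  also have "\<dots> = pochhammer a 4 * F4 m * Z"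
    unfolding s0 s1 s2 s3 s4 unfolding F4_def c0_def c1_def c2_def c3_def p2 p3 p4 by algebra
  finally show ?thesis using e by (simp add: X_def Z_def m_def)
qed

lemma momF3:
  assumes "finite S" "j \<in> {1..n}"
  shows "(\<Sum>f\<in>S \<rightarrow>\<^sub>E {1..n}. W S n a f * F3 (cnt S f j)) * pochhammer (a*n) 3
       = pochhammer a 3 * F3 (card S) * pochhammer (a*n) (card S)"
proof -
  define X where "X = a * real n"
  define Z where "Z = pochhammer X (card S)"
  define m where "m = real (card S)"
  define c0 where "c0 = - a*(a+1)*(a+2)"
  define c1 where "c1 = 3*(a+1)*(a+2)"
  define c2 where "c2 = - 3*(a+2)"
  let ?u = "\<lambda>s f. pochhammer (a + cnt S f j) s"
  let ?M = "\<lambda>s. \<Sum>f\<in>S \<rightarrow>\<^sub>E {1..n}. W S n a f * ?u s f"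
  have pt: "F3 (cnt S f j) = c0 + c1 * ?u 1 f + c2 * ?u 2 f + ?u 3 f" for f
    unfolding F3_def c0_def c1_def c2_def p2 p3 pochhammer_1 by algebra
  have "(\<Sum>f\<in>S \<rightarrow>\<^sub>E {1..n}. W S n a f * F3 (cnt S f j))
     = c0 * (\<Sum>f\<in>S \<rightarrow>\<^sub>E {1..n}. W S n a f) + c1 * ?M 1 + c2 * ?M 2 + ?M 3"
    unfolding pt by (simp add: sum.distrib sum_distrib_left algebra_simps)
  also have "\<dots> = c0 * pochhammer X (card S) + c1 * (pochhammer a 1 * pochhammer (X + 1) (card S))
       + c2 * (pochhammer a 2 * pochhammer (X + 2) (card S))
       + (pochhammer a 3 * pochhammer (X + 3) (card S))"
    using mom_one[OF assms, of a 1] mom_one[OF assms, of a 2] mom_one[OF assms, of a 3]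
      sumW[OF assms(1), of n a] unfolding X_def by simp
  finally have e: "(\<Sum>f\<in>S \<rightarrow>\<^sub>E {1..n}. W S n a f * F3 (cnt S f j)) = \<dots>" .
  have s1: "pochhammer (X + 1) (card S) * pochhammer X 3 = Z * (X + m) * pochhammer (X + 1) 2"
    using poch_split[of 1 3 X "card S"] by (simp add: Z_def m_def)
  have s2: "pochhammer (X + 2) (card S) * pochhammer X 3 = Z * pochhammer (X + m) 2 * (X + 2)"
    using poch_split[of 2 3 X "card S"] by (simp add: Z_def m_def)
  have s3: "pochhammer (X + 3) (card S) * pochhammer X 3 = Z * pochhammer (X + m) 3"
    using poch_split[of 3 3 X "card S"] by (simp add: Z_def m_def)
  have "(c0 * pochhammer X (card S) + c1 * (pochhammer a 1 * pochhammer (X + 1) (card S))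
       + c2 * (pochhammer a 2 * pochhammer (X + 2) (card S))
       + (pochhammer a 3 * pochhammer (X + 3) (card S))) * pochhammer X 3
     = c0 * Z * pochhammer X 3 + c1 * a * (pochhammer (X + 1) (card S) * pochhammer X 3)
       + c2 * pochhammer a 2 * (pochhammer (X + 2) (card S) * pochhammer X 3)
       + pochhammer a 3 * (pochhammer (X + 3) (card S) * pochhammer X 3)"
    by (simp add: algebra_simps Z_def)
  also have "\<dots> = pochhammer a 3 * F3 m * Z"
    unfolding s1 s2 s3 unfolding F3_def c0_def c1_def c2_def p2 p3 by algebra
  finally show ?thesis using e by (simp add: X_def Z_def m_def)
qed

lemma momF2:
  assumes "finite S" "j \<in> {1..n}"
  shows "(\<Sum>f\<in>S \<rightarrow>\<^sub>E {1..n}. W S n a f * F2 (cnt S f j)) * pochhammer (a*n) 2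
       = pochhammer a 2 * F2 (card S) * pochhammer (a*n) (card S)"
proof -
  define X where "X = a * real n"
  define Z where "Z = pochhammer X (card S)"
  define m where "m = real (card S)"
  define c0 where "c0 = a*(a+1)"
  define c1 where "c1 = - 2*(a+1)"
  let ?u = "\<lambda>s f. pochhammer (a + cnt S f j) s"
  let ?M = "\<lambda>s. \<Sum>f\<in>S \<rightarrow>\<^sub>E {1..n}. W S n a f * ?u s f"
  have pt: "F2 (cnt S f j) = c0 + c1 * ?u 1 f + ?u 2 f" for f
    unfolding F2_def c0_def c1_def p2 pochhammer_1 by algebra
  have "(\<Sum>f\<in>S \<rightarrow>\<^sub>E {1..n}. W S n a f * F2 (cnt S f j))
     = c0 * (\<Sum>f\<in>S \<rightarrow>\<^sub>E {1..n}. W S n a f) + c1 * ?M 1 + ?M 2"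
    unfolding pt by (simp add: sum.distrib sum_distrib_left algebra_simps)
  also have "\<dots> = c0 * pochhammer X (card S) + c1 * (pochhammer a 1 * pochhammer (X + 1) (card S))
       + (pochhammer a 2 * pochhammer (X + 2) (card S))"
    using mom_one[OF assms, of a 1] mom_one[OF assms, of a 2]
      sumW[OF assms(1), of n a] unfolding X_def by simp
  finally have e: "(\<Sum>f\<in>S \<rightarrow>\<^sub>E {1..n}. W S n a f * F2 (cnt S f j)) = \<dots>" .
  have s1: "pochhammer (X + 1) (card S) * pochhammer X 2 = Z * (X + m) * (X + 1)"
    using poch_split[of 1 2 X "card S"] by (simp add: Z_def m_def)
  have s2: "pochhammer (X + 2) (card S) * pochhammer X 2 = Z * pochhammer (X + m) 2"
    using poch_split[of 2 2 X "card S"] by (simp add: Z_def m_def)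
  have "(c0 * pochhammer X (card S) + c1 * (pochhammer a 1 * pochhammer (X + 1) (card S))
       + (pochhammer a 2 * pochhammer (X + 2) (card S))) * pochhammer X 2
     = c0 * Z * pochhammer X 2 + c1 * a * (pochhammer (X + 1) (card S) * pochhammer X 2)
       + pochhammer a 2 * (pochhammer (X + 2) (card S) * pochhammer X 2)"
    by (simp add: algebra_simps Z_def)
  also have "\<dots> = pochhammer a 2 * F2 m * Z"
    unfolding s1 s2 unfolding F2_def c0_def c1_def p2 by algebra
  finally show ?thesis using e by (simp add: X_def Z_def m_def)
qed

lemma momF22:
  assumes "finite S" "j1 \<in> {1..n}" "j2 \<in> {1..n}" "j1 \<noteq> j2"
  shows "(\<Sum>f\<in>S \<rightarrow>\<^sub>E {1..n}. W S n a f * (F2 (cnt S f j1) * F2 (cnt S f j2))) * pochhammer (a*n) 4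
       = pochhammer a 2 * pochhammer a 2 * F4 (card S) * pochhammer (a*n) (card S)"
proof -
  define X where "X = a * real n"
  define Z where "Z = pochhammer X (card S)"
  define m where "m = real (card S)"
  define c0 where "c0 = a*(a+1)"
  define c1 where "c1 = - 2*(a+1)"
  let ?u = "\<lambda>s f. pochhammer (a + cnt S f j1) s"
  let ?v = "\<lambda>s f. pochhammer (a + cnt S f j2) s"
  let ?M = "\<lambda>s t. \<Sum>f\<in>S \<rightarrow>\<^sub>E {1..n}. W S n a f * (?u s f * ?v t f)"
  have pt: "F2 (cnt S f j1) * F2 (cnt S f j2) = c0 * c0 * (?u 0 f * ?v 0 f) + c0 * c1 * (?u 0 f * ?v 1 f)
     + c0 * (?u 0 f * ?v 2 f) + c1 * c0 * (?u 1 f * ?v 0 f) + c1 * c1 * (?u 1 f * ?v 1 f) + c1 * (?u 1 f * ?v 2 f)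
     + c0 * (?u 2 f * ?v 0 f) + c1 * (?u 2 f * ?v 1 f) + (?u 2 f * ?v 2 f)" for f
    unfolding F2_def c0_def c1_def p2 pochhammer_1 pochhammer_0 by algebra
  have e: "(\<Sum>f\<in>S \<rightarrow>\<^sub>E {1..n}. W S n a f * (F2 (cnt S f j1) * F2 (cnt S f j2)))
     = c0 * c0 * ?M 0 0 + c0 * c1 * ?M 0 1 + c0 * ?M 0 2 + c1 * c0 * ?M 1 0 + c1 * c1 * ?M 1 1
      + c1 * ?M 1 2 + c0 * ?M 2 0 + c1 * ?M 2 1 + ?M 2 2"
    unfolding pt by (simp add: sum.distrib sum_distrib_left algebra_simps del: pochhammer_0 pochhammer_1)
  have mp: "?M s t = pochhammer a s * pochhammer a t * pochhammer (X + (s + t)) (card S)" for s t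
    using mom_pair[OF assms, of a s t] unfolding X_def by (simp add: add.assoc)
  have sp: "pochhammer (X + real r) (card S) * pochhammer X 4 = Z * pochhammer (X + m) r * pochhammer (X + r) (4 - r)"
    if "r \<le> 4" for r
    using poch_split[of r 4 X "card S"] that by (simp add: Z_def m_def)
  have "(c0 * c0 * ?M 0 0 + c0 * c1 * ?M 0 1 + c0 * ?M 0 2 + c1 * c0 * ?M 1 0 + c1 * c1 * ?M 1 1
      + c1 * ?M 1 2 + c0 * ?M 2 0 + c1 * ?M 2 1 + ?M 2 2) * pochhammer X 4
     = c0 * c0 * (Z * pochhammer X 4)
      + 2 * c0 * c1 * a * (pochhammer (X + 1) (card S) * pochhammer X 4)
      + (2 * c0 * pochhammer a 2 + c1 * c1 * a * a) * (pochhammer (X + 2) (card S) * pochhammer X 4)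
      + 2 * c1 * a * pochhammer a 2 * (pochhammer (X + 3) (card S) * pochhammer X 4)
      + pochhammer a 2 * pochhammer a 2 * (pochhammer (X + 4) (card S) * pochhammer X 4)"
    unfolding mp by (simp add: algebra_simps Z_def)
  also have "\<dots> = pochhammer a 2 * pochhammer a 2 * F4 m * Z"
  proof -
    have s1: "pochhammer (X + 1) (card S) * pochhammer X 4 = Z * (X + m) * pochhammer (X + 1) 3"
      using poch_split[of 1 4 X "card S"] by (simp add: Z_def m_def)
    have s2: "pochhammer (X + 2) (card S) * pochhammer X 4 = Z * pochhammer (X + m) 2 * pochhammer (X + 2) 2"
      using poch_split[of 2 4 X "card S"] by (simp add: Z_def m_def)
    have s3: "pochhammer (X + 3) (card S) * pochhammer X 4 = Z * pochhammer (X + m) 3 * (X + 3)"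
      using poch_split[of 3 4 X "card S"] by (simp add: Z_def m_def)
    have s4: "pochhammer (X + 4) (card S) * pochhammer X 4 = Z * pochhammer (X + m) 4"
      using poch_split[of 4 4 X "card S"] by (simp add: Z_def m_def)
    show ?thesis unfolding s1 s2 s3 s4
      unfolding F4_def c0_def c1_def p2 p3 p4 by algebra
  qed
  finally show ?thesis using e by (simp add: X_def Z_def m_def)
qed

definition S0 :: "nat \<Rightarrow> nat \<Rightarrow> (nat \<times> nat) set" where
  "S0 n k = {1..n} \<times> {1..k}"

definition phi :: "nat \<Rightarrow> nat \<Rightarrow> (nat \<Rightarrow> nat \<Rightarrow> nat) \<Rightarrow> (nat \<times> nat \<Rightarrow> nat)" where
  "phi n k M = (\<lambda>p. if p \<in> S0 n k then M (fst p) (snd p) else undefined)"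

definition psi :: "nat \<Rightarrow> nat \<Rightarrow> (nat \<times> nat \<Rightarrow> nat) \<Rightarrow> (nat \<Rightarrow> nat \<Rightarrow> nat)" where
  "psi n k f = (\<lambda>i. if i \<in> {1..n} then (\<lambda>l. if l \<in> {1..k} then f (i, l) else undefined) else undefined)"

lemma finite_S0 [simp]: "finite (S0 n k)" by (simp add: S0_def)
lemma card_S0: "card (S0 n k) = k * n" by (simp add: S0_def)

lemma bij_phi: "bij_betw (phi n k) (kout_maps n k) (S0 n k \<rightarrow>\<^sub>E {1..n})"
proof (rule bij_betw_byWitness[where f' = "psi n k"])
  show "\<forall>M\<in>kout_maps n k. psi n k (phi n k M) = M"
  proof
    fix M assume M: "M \<in> kout_maps n k"
    show "psi n k (phi n k M) = M"
    proof (rule ext)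
      fix i
      show "psi n k (phi n k M) i = M i"
      proof (cases "i \<in> {1..n}")
        case True
        then have Mi: "M i \<in> {1..k} \<rightarrow>\<^sub>E {1..n}" using M unfolding kout_maps_def by blast
        show ?thesis
        proof (rule ext)
          fix l show "psi n k (phi n k M) i l = M i l"
            using True Mi unfolding psi_def phi_def S0_def by (cases "l \<in> {1..k}") auto
        qed
      next
        case False
        then show ?thesis using M unfolding kout_maps_def psi_def by auto
      qed
    qed
  qed
  show "\<forall>f\<in>S0 n k \<rightarrow>\<^sub>E {1..n}. phi n k (psi n k f) = f"
  proof
    fix f assume f: "f \<in> S0 n k \<rightarrow>\<^sub>E {1..n}"
    show "phi n k (psi n k f) = f"
    proof (rule ext)
      fix p :: "nat \<times> nat"
      show "phi n k (psi n k f) p = f p"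
        using f unfolding phi_def psi_def S0_def by (cases p) (auto simp: PiE_iff extensional_def)
    qed
  qed
  show "phi n k ` kout_maps n k \<subseteq> S0 n k \<rightarrow>\<^sub>E {1..n}"
  proof
    fix f assume "f \<in> phi n k ` kout_maps n k"
    then obtain M where M: "M \<in> kout_maps n k" and f: "f = phi n k M" by blast
    show "f \<in> S0 n k \<rightarrow>\<^sub>E {1..n}"
      unfolding f using M unfolding kout_maps_def phi_def S0_def by (auto simp: PiE_iff extensional_def)
  qed
  show "psi n k ` (S0 n k \<rightarrow>\<^sub>E {1..n}) \<subseteq> kout_maps n k"
  proof
    fix M assume "M \<in> psi n k ` (S0 n k \<rightarrow>\<^sub>E {1..n})"
    then obtain f where f: "f \<in> S0 n k \<rightarrow>\<^sub>E {1..n}" and M: "M = psi n k f" by blast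
    show "M \<in> kout_maps n k"
      unfolding M kout_maps_def using f unfolding psi_def S0_def by (auto simp: PiE_iff extensional_def)
  qed
qed

lemma indeg_phi: "indeg n k M j = cnt (S0 n k) (phi n k M) j"
proof -
  have "{(i, l). i \<in> {1..n} \<and> l \<in> {1..k} \<and> M i l = j} = {p \<in> S0 n k. phi n k M p = j}"
    by (auto simp: S0_def phi_def)
  then show ?thesis by (simp add: indeg_def cnt_def)
qed

lemma prob_alpha_phi:
  "prob_alpha n k a M = W (S0 n k) n a (phi n k M) / pochhammer (a * n) (card (S0 n k))"
  by (simp add: prob_alpha_def W_def indeg_phi card_S0)

lemma transfer_sum:
  "(\<Sum>M\<in>kout_maps n k. g (phi n k M)) = (\<Sum>f\<in>S0 n k \<rightarrow>\<^sub>E {1..n}. g f)"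
  using sum.reindex_bij_betw[OF bij_phi, of g n k] by simp

lemma finite_kout [simp]: "finite (kout_maps n k)"
  by (simp add: kout_maps_def finite_PiE)

definition Tst :: "'s set \<Rightarrow> nat \<Rightarrow> ('s \<Rightarrow> nat) \<Rightarrow> real" where
  "Tst S n f = (\<Sum>j\<in>{1..n}. F2 (cnt S f j))"

lemma F2sq: "F2 y * F2 y = F4 y + 4 * F3 y + 2 * F2 y"
  unfolding F2_def F3_def F4_def by algebra

lemma moments:
  fixes \<omega> :: "('s \<Rightarrow> nat) \<Rightarrow> real"
  assumes hA2: "\<And>j. j \<in> {1..n} \<Longrightarrow> (\<Sum>f\<in>\<Omega>. \<omega> f * F2 (cnt S f j)) = Ma"
    and hA3: "\<And>j. j \<in> {1..n} \<Longrightarrow> (\<Sum>f\<in>\<Omega>. \<omega> f * F3 (cnt S f j)) = Mb"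
    and hA4: "\<And>j. j \<in> {1..n} \<Longrightarrow> (\<Sum>f\<in>\<Omega>. \<omega> f * F4 (cnt S f j)) = Mc"
    and hB: "\<And>j1 j2. j1 \<in> {1..n} \<Longrightarrow> j2 \<in> {1..n} \<Longrightarrow> j1 \<noteq> j2 \<Longrightarrow>
         (\<Sum>f\<in>\<Omega>. \<omega> f * (F2 (cnt S f j1) * F2 (cnt S f j2))) = Bm"
  shows "(\<Sum>f\<in>\<Omega>. \<omega> f * Tst S n f) = n * Ma"
    and "(\<Sum>f\<in>\<Omega>. \<omega> f * (Tst S n f)^2) = n * (Mc + 4 * Mb + 2 * Ma) + n * (real n - 1) * Bm"
proof -
  show "(\<Sum>f\<in>\<Omega>. \<omega> f * Tst S n f) = n * Ma"
    unfolding Tst_def sum_distrib_left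
    by (subst sum.swap) (simp add: hA2)
  have sq: "(Tst S n f)^2 = (\<Sum>j\<in>{1..n}. \<Sum>j'\<in>{1..n}. F2 (cnt S f j) * F2 (cnt S f j'))" for f
    unfolding Tst_def power2_eq_square sum_product ..
  have inner: "(\<Sum>j'\<in>{1..n}. \<Sum>f\<in>\<Omega>. \<omega> f * (F2 (cnt S f j) * F2 (cnt S f j')))
      = (Mc + 4 * Mb + 2 * Ma) + (real n - 1) * Bm" if j: "j \<in> {1..n}" for j
  proof -
    have "(\<Sum>j'\<in>{1..n}. \<Sum>f\<in>\<Omega>. \<omega> f * (F2 (cnt S f j) * F2 (cnt S f j')))
       = (\<Sum>f\<in>\<Omega>. \<omega> f * (F2 (cnt S f j) * F2 (cnt S f j)))
         + (\<Sum>j'\<in>{1..n} - {j}. \<Sum>f\<in>\<Omega>. \<omega> f * (F2 (cnt S f j) * F2 (cnt S f j')))"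
      using j by (simp add: sum.remove)
    also have "(\<Sum>f\<in>\<Omega>. \<omega> f * (F2 (cnt S f j) * F2 (cnt S f j))) = Mc + 4 * Mb + 2 * Ma"
    proof -
      have c: "(\<Sum>f\<in>\<Omega>. \<omega> f * (c * g f)) = c * (\<Sum>f\<in>\<Omega>. \<omega> f * g f)" for c :: real and g
        by (simp add: sum_distrib_left mult.left_commute)
      show ?thesis
        unfolding F2sq distrib_left sum.distrib c using hA2[OF j] hA3[OF j] hA4[OF j] by simp
    qed
    also have "(\<Sum>j'\<in>{1..n} - {j}. \<Sum>f\<in>\<Omega>. \<omega> f * (F2 (cnt S f j) * F2 (cnt S f j'))) = (\<Sum>j'\<in>{1..n} - {j}. Bm)"
      by (rule sum.cong) (use j hB in auto)
    also have "\<dots> = (real n - 1) * Bm"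
      using j by (simp add: of_nat_diff)
    finally show ?thesis .
  qed
  have "(\<Sum>f\<in>\<Omega>. \<omega> f * (Tst S n f)^2) = (\<Sum>j\<in>{1..n}. \<Sum>j'\<in>{1..n}. \<Sum>f\<in>\<Omega>. \<omega> f * (F2 (cnt S f j) * F2 (cnt S f j')))"
    unfolding sq sum_distrib_left
    by (subst sum.swap, rule sum.cong, simp, subst sum.swap, simp)
  also have "\<dots> = (\<Sum>j\<in>{1..n}. (Mc + 4 * Mb + 2 * Ma) + (real n - 1) * Bm)"
    by (rule sum.cong) (use inner in blast)+
  also have "\<dots> = n * (Mc + 4 * Mb + 2 * Ma) + n * (real n - 1) * Bm"
    by (simp add: algebra_simps)
  finally show "(\<Sum>f\<in>\<Omega>. \<omega> f * (Tst S n f)^2) = n * (Mc + 4 * Mb + 2 * Ma) + n * (real n - 1) * Bm" .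
qed

lemma Lp:
  fixes c :: real
  shows "((\<lambda>a. pochhammer (a*c) r / a^r) \<longlongrightarrow> c^r) at_top"
proof -
  have ev: "\<forall>\<^sub>F a in at_top. (\<Prod>i\<in>{0..<r}. c + real i / a) = pochhammer (a*c) r / a^r"
  proof (rule eventually_mono[OF eventually_gt_at_top[of 0]])
    fix a :: real assume a: "a > 0"
    have "pochhammer (a*c) r / a^r = (\<Prod>i\<in>{0..<r}. a*c + real i) / (\<Prod>i\<in>{0..<r}. a)"
      by (simp add: pochhammer_prod)
    also have "\<dots> = (\<Prod>i\<in>{0..<r}. (a*c + real i) / a)"
      by (simp add: prod_dividef)
    also have "\<dots> = (\<Prod>i\<in>{0..<r}. c + real i / a)"
      using a by (intro prod.cong) (auto simp: field_simps)
    finally show "(\<Prod>i\<in>{0..<r}. c + real i / a) = pochhammer (a*c) r / a^r" by simp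
  qed
  have "((\<lambda>a. \<Prod>i\<in>{0..<r}. c + real i / a) \<longlongrightarrow> (\<Prod>i\<in>{0..<r}. c + 0)) at_top"
    by (intro tendsto_prod tendsto_add tendsto_const tendsto_divide_0[OF tendsto_const]
        filterlim_at_top_imp_at_infinity filterlim_ident)
  then have "((\<lambda>a. \<Prod>i\<in>{0..<r}. c + real i / a) \<longlongrightarrow> c^r) at_top" by simp
  then show ?thesis using ev by (rule Lim_transform_eventually)
qed

lemma W_limit:
  assumes "finite S" "f \<in> S \<rightarrow>\<^sub>E {1..n}" "n \<ge> 1"
  shows "((\<lambda>a. W S n a f / pochhammer (a * n) (card S)) \<longlongrightarrow> 1 / real n ^ card S) at_top"
proof -
  have sc: "(\<Sum>j\<in>{1..n}. cnt S f j) = card S"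
    using sum_cnt[OF assms(1) _ assms(2)] by simp
  have pt: "(\<Prod>j\<in>{1..n}. pochhammer (a*1) (cnt S f j) / a ^ cnt S f j)
        / (pochhammer (a * n) (card S) / a ^ card S) = W S n a f / pochhammer (a * n) (card S)"
    if a: "a > 0" for a :: real
  proof -
    have "a ^ card S = (\<Prod>j\<in>{1..n}. a ^ cnt S f j)"
      unfolding sc[symmetric] by (simp add: power_sum)
    then have "(\<Prod>j\<in>{1..n}. pochhammer (a*1) (cnt S f j) / a ^ cnt S f j) = W S n a f / a ^ card S"
      by (simp add: W_def prod_dividef)
    then show ?thesis
      using a by (simp add: field_simps)
  qed
  have ev: "\<forall>\<^sub>F (a::real) in at_top. (\<Prod>j\<in>{1..n}. pochhammer (a*1) (cnt S f j) / a ^ cnt S f j)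
        / (pochhammer (a * n) (card S) / a ^ card S) = W S n a f / pochhammer (a * n) (card S)"
    using eventually_gt_at_top[of "0::real"] by (rule eventually_mono) (rule pt)
  have "((\<lambda>a::real. (\<Prod>j\<in>{1..n}. pochhammer (a*1) (cnt S f j) / a ^ cnt S f j)
        / (pochhammer (a * n) (card S) / a ^ card S)) \<longlongrightarrow> (\<Prod>j\<in>{1..n}. 1 ^ cnt S f j) / real n ^ card S) at_top"
    using assms(3) by (intro tendsto_divide tendsto_prod Lp) auto
  then have "((\<lambda>a::real. (\<Prod>j\<in>{1..n}. pochhammer (a*1) (cnt S f j) / a ^ cnt S f j)
        / (pochhammer (a * n) (card S) / a ^ card S)) \<longlongrightarrow> 1 / real n ^ card S) at_top" by simp
  then show ?thesis using ev by (rule Lim_transform_eventually)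
qed

lemma unif_limit:
  assumes "finite S" "n \<ge> 1"
    and ev: "\<forall>\<^sub>F a in at_top. (\<Sum>f\<in>S \<rightarrow>\<^sub>E {1..n}. W S n a f / pochhammer (a * n) (card S) * g f) = C a"
    and lim: "(C \<longlongrightarrow> L) at_top"
  shows "(\<Sum>f\<in>S \<rightarrow>\<^sub>E {1..n}. 1 / real n ^ card S * g f) = L"
proof -
  have "((\<lambda>a. \<Sum>f\<in>S \<rightarrow>\<^sub>E {1..n}. W S n a f / pochhammer (a * n) (card S) * g f)
      \<longlongrightarrow> (\<Sum>f\<in>S \<rightarrow>\<^sub>E {1..n}. 1 / real n ^ card S * g f)) at_top"
    by (intro tendsto_sum tendsto_mult tendsto_const W_limit assms(1,2))
  moreover have "((\<lambda>a. \<Sum>f\<in>S \<rightarrow>\<^sub>E {1..n}. W S n a f / pochhammer (a * n) (card S) * g f) \<longlongrightarrow> L) at_top"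
    using lim ev by (rule Lim_transform_eventually[OF _ eventually_mono]) auto
  ultimately show ?thesis by (rule tendsto_unique[rotated]) simp
qed

lemma sum_div_mult: "(\<Sum>f\<in>A. w f / Z * g f) = (\<Sum>f\<in>A. w f * g f) / (Z::real)"
  by (simp add: sum_divide_distrib)

lemma poch_pos_real: "x > 0 \<Longrightarrow> pochhammer (x::real) r > 0"
  by (rule pochhammer_pos)

context
  fixes S :: "'s set" and n :: nat and a :: real
  assumes fin: "finite S" and n1: "n \<ge> 1" and apos: "a > 0"
begin

lemma Xpos: "a * real n > 0" using n1 apos by simp

lemma polF2: "j \<in> {1..n} \<Longrightarrow> (\<Sum>f\<in>S \<rightarrow>\<^sub>E {1..n}. W S n a f / pochhammer (a*n) (card S) * F2 (cnt S f j))
   = pochhammer a 2 * F2 (card S) / pochhammer (a*n) 2"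
  using momF2[OF fin, of j n a] poch_pos_real[OF Xpos, of 2] poch_pos_real[OF Xpos, of "card S"]
  unfolding sum_div_mult by (simp add: field_simps)

lemma polF3: "j \<in> {1..n} \<Longrightarrow> (\<Sum>f\<in>S \<rightarrow>\<^sub>E {1..n}. W S n a f / pochhammer (a*n) (card S) * F3 (cnt S f j))
   = pochhammer a 3 * F3 (card S) / pochhammer (a*n) 3"
  using momF3[OF fin, of j n a] poch_pos_real[OF Xpos, of 3] poch_pos_real[OF Xpos, of "card S"]
  unfolding sum_div_mult by (simp add: field_simps)

lemma polF4: "j \<in> {1..n} \<Longrightarrow> (\<Sum>f\<in>S \<rightarrow>\<^sub>E {1..n}. W S n a f / pochhammer (a*n) (card S) * F4 (cnt S f j))
   = pochhammer a 4 * F4 (card S) / pochhammer (a*n) 4"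
  using momF4[OF fin, of j n a] poch_pos_real[OF Xpos, of 4] poch_pos_real[OF Xpos, of "card S"]
  unfolding sum_div_mult by (simp add: field_simps)

lemma polF22: "j1 \<in> {1..n} \<Longrightarrow> j2 \<in> {1..n} \<Longrightarrow> j1 \<noteq> j2 \<Longrightarrow>
   (\<Sum>f\<in>S \<rightarrow>\<^sub>E {1..n}. W S n a f / pochhammer (a*n) (card S) * (F2 (cnt S f j1) * F2 (cnt S f j2)))
   = pochhammer a 2 * pochhammer a 2 * F4 (card S) / pochhammer (a*n) 4"
  using momF22[OF fin, of j1 n j2 a] poch_pos_real[OF Xpos, of 4] poch_pos_real[OF Xpos, of "card S"]
  unfolding sum_div_mult by (simp add: field_simps)

lemma pol1: "(\<Sum>f\<in>S \<rightarrow>\<^sub>E {1..n}. W S n a f / pochhammer (a*n) (card S) * 1) = 1"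
  using sumW[OF fin, of n a] poch_pos_real[OF Xpos, of "card S"]
  unfolding sum_div_mult by simp

end

lemma ratio_lim:
  assumes "n \<ge> 1"
  shows "((\<lambda>a. pochhammer a r / pochhammer (a * real n) r) \<longlongrightarrow> 1 / real n ^ r) at_top"
proof -
  have "((\<lambda>a. (pochhammer (a*1) r / a^r) / (pochhammer (a * real n) r / a^r)) \<longlongrightarrow> 1^r / real n ^ r) at_top"
    using assms by (intro tendsto_divide Lp) auto
  moreover have "\<forall>\<^sub>F (a::real) in at_top. (pochhammer (a*1) r / a^r) / (pochhammer (a * real n) r / a^r)
      = pochhammer a r / pochhammer (a * real n) r"
  proof (rule eventually_mono[OF eventually_gt_at_top[of 0]])
    fix a :: real assume a: "a > 0"
    then have "pochhammer (a * real n) r > 0" "a ^ r > 0" using assms by (auto intro!: pochhammer_pos)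
    then show "(pochhammer (a*1) r / a^r) / (pochhammer (a * real n) r / a^r)
      = pochhammer a r / pochhammer (a * real n) r" using a by (simp add: field_simps)
  qed
  ultimately have "((\<lambda>a. pochhammer a r / pochhammer (a * real n) r) \<longlongrightarrow> 1^r / real n ^ r) at_top"
    by (rule Lim_transform_eventually)
  then show ?thesis by simp
qed

context
  fixes S :: "'s set" and n :: nat
  assumes fin: "finite S" and n1: "n \<ge> 1"
begin

lemma unifF2: "j \<in> {1..n} \<Longrightarrow> (\<Sum>f\<in>S \<rightarrow>\<^sub>E {1..n}. 1 / real n ^ card S * F2 (cnt S f j)) = F2 (card S) / real n ^ 2"
  apply (rule unif_limit[OF fin n1, where C = "\<lambda>a. pochhammer a 2 * F2 (card S) / pochhammer (a*n) 2"])
   apply (rule eventually_mono[OF eventually_gt_at_top[of 0]])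
   apply (rule polF2[OF fin n1]; simp)
  using tendsto_mult[OF tendsto_const[of "F2 (card S)"] ratio_lim[OF n1, of 2]] by (simp add: field_simps)

lemma unifF3: "j \<in> {1..n} \<Longrightarrow> (\<Sum>f\<in>S \<rightarrow>\<^sub>E {1..n}. 1 / real n ^ card S * F3 (cnt S f j)) = F3 (card S) / real n ^ 3"
  apply (rule unif_limit[OF fin n1, where C = "\<lambda>a. pochhammer a 3 * F3 (card S) / pochhammer (a*n) 3"])
   apply (rule eventually_mono[OF eventually_gt_at_top[of 0]])
   apply (rule polF3[OF fin n1]; simp)
  using tendsto_mult[OF tendsto_const[of "F3 (card S)"] ratio_lim[OF n1, of 3]] by (simp add: field_simps)

lemma unifF4: "j \<in> {1..n} \<Longrightarrow> (\<Sum>f\<in>S \<rightarrow>\<^sub>E {1..n}. 1 / real n ^ card S * F4 (cnt S f j)) = F4 (card S) / real n ^ 4"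
  apply (rule unif_limit[OF fin n1, where C = "\<lambda>a. pochhammer a 4 * F4 (card S) / pochhammer (a*n) 4"])
   apply (rule eventually_mono[OF eventually_gt_at_top[of 0]])
   apply (rule polF4[OF fin n1]; simp)
  using tendsto_mult[OF tendsto_const[of "F4 (card S)"] ratio_lim[OF n1, of 4]] by (simp add: field_simps)

lemma unifF22: "j1 \<in> {1..n} \<Longrightarrow> j2 \<in> {1..n} \<Longrightarrow> j1 \<noteq> j2 \<Longrightarrow>
   (\<Sum>f\<in>S \<rightarrow>\<^sub>E {1..n}. 1 / real n ^ card S * (F2 (cnt S f j1) * F2 (cnt S f j2))) = F4 (card S) / real n ^ 4"
proof -
  assume j: "j1 \<in> {1..n}" "j2 \<in> {1..n}" "j1 \<noteq> j2"
  have l: "((\<lambda>a. (pochhammer (a*1) 2 / a^2) * (pochhammer (a*1) 2 / a^2) * F4 (card S) / (pochhammer (a * real n) 4 / a^4))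
      \<longlongrightarrow> 1^2 * 1^2 * F4 (card S) / real n ^ 4) at_top"
    using n1 by (intro tendsto_divide tendsto_mult Lp tendsto_const) auto
  have e: "\<forall>\<^sub>F (a::real) in at_top. (pochhammer (a*1) 2 / a^2) * (pochhammer (a*1) 2 / a^2) * F4 (card S) / (pochhammer (a * real n) 4 / a^4)
      = pochhammer a 2 * pochhammer a 2 * F4 (card S) / pochhammer (a*n) 4"
  proof (rule eventually_mono[OF eventually_gt_at_top[of 0]])
    fix a :: real assume a: "a > 0"
    then have "pochhammer (a * real n) 4 > 0" using n1 by (auto intro!: pochhammer_pos)
    then show "(pochhammer (a*1) 2 / a^2) * (pochhammer (a*1) 2 / a^2) * F4 (card S) / (pochhammer (a * real n) 4 / a^4)
      = pochhammer a 2 * pochhammer a 2 * F4 (card S) / pochhammer (a*n) 4"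
      using a by (simp add: field_simps power2_eq_square eval_nat_numeral)
  qed
  show ?thesis
    apply (rule unif_limit[OF fin n1, where C = "\<lambda>a. pochhammer a 2 * pochhammer a 2 * F4 (card S) / pochhammer (a*n) 4"])
     apply (rule eventually_mono[OF eventually_gt_at_top[of 0]])
     apply (rule polF22[OF fin n1]; use j in simp)
    using l e by (simp add: Lim_transform_eventually)
qed

lemma unif1: "(\<Sum>f\<in>S \<rightarrow>\<^sub>E {1..n}. 1 / real n ^ card S * 1) = 1"
  apply (rule unif_limit[OF fin n1, where C = "\<lambda>a. 1"])
   apply (rule eventually_mono[OF eventually_gt_at_top[of 0]])
   apply (rule pol1[OF fin n1]; simp)
  by simp

end

lemma F_bounds_big:
  fixes x :: real
  assumes x: "x \<ge> 4"
  shows "0 \<le> F2 x" "F2 x \<le> x ^ 2" "0 \<le> F3 x" "F3 x \<le> x ^ 3"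
    "0 \<le> F4 x" "F4 x \<le> x ^ 4" "F4 x \<le> F2 x ^ 2"
proof -
  have a: "0 \<le> x - 3" "x - 3 \<le> x - 2" "0 \<le> x - 2" "x - 2 \<le> x - 1" "0 \<le> x - 1" "x - 1 \<le> x" "0 \<le> x"
    using x by auto
  have p1: "x * (x - 1) \<le> x * x" using a by (intro mult_left_mono) auto
  have p2: "x * (x - 1) * (x - 2) \<le> x * x * x" using a p1 by (intro mult_mono) auto
  have p3: "x * (x - 1) * (x - 2) * (x - 3) \<le> x * x * x * x" using a p2 by (intro mult_mono) auto
  show "0 \<le> F2 x" "0 \<le> F3 x" "0 \<le> F4 x" using a by (auto simp: F2_def F3_def F4_def)
  show "F2 x \<le> x ^ 2" "F3 x \<le> x ^ 3" "F4 x \<le> x ^ 4"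
    using p1 p2 p3 by (auto simp: F2_def F3_def F4_def power2_eq_square power3_eq_cube eval_nat_numeral mult.assoc)
  have "F2 x ^ 2 - F4 x = (x * (x - 1)) * (4 * x - 6)"
    unfolding F2_def F4_def by algebra
  also have "\<dots> \<ge> 0" using a x by (intro mult_nonneg_nonneg) auto
  finally show "F4 x \<le> F2 x ^ 2" by simp
qed

lemma F_bounds:
  fixes m :: nat
  shows "0 \<le> F2 m" "F2 m \<le> real m ^ 2" "0 \<le> F3 m" "F3 m \<le> real m ^ 3"
    "0 \<le> F4 m" "F4 m \<le> real m ^ 4" "F4 m \<le> F2 m ^ 2"
proof -
  have c: "m = 0 \<or> m = 1 \<or> m = 2 \<or> m = 3 \<or> real m \<ge> 4" by linarith
  then show "0 \<le> F2 m" "F2 m \<le> real m ^ 2" "0 \<le> F3 m" "F3 m \<le> real m ^ 3"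
    "0 \<le> F4 m" "F4 m \<le> real m ^ 4" "F4 m \<le> F2 m ^ 2"
    using F_bounds_big[of "real m"] by (auto simp: F2_def F3_def F4_def)
qed

lemma ar_bound:
  fixes a :: real
  assumes a: "a \<ge> 1" and n: "n \<ge> 1"
  shows "0 \<le> pochhammer a r / pochhammer (a * n) r" "pochhammer a r / pochhammer (a * n) r \<le> fact r / real n ^ r"
proof -
  have X: "a * n > 0" using a n by simp
  show "0 \<le> pochhammer a r / pochhammer (a * n) r"
    using a X by (intro divide_nonneg_pos pochhammer_nonneg pochhammer_pos) auto
  have "pochhammer a r / pochhammer (a * n) r = (\<Prod>i\<in>{0..<r}. (a + i) / (a * n + i))"
    by (simp add: pochhammer_prod prod_dividef)
  also have "\<dots> \<le> (\<Prod>i\<in>{0..<r}. (1 + real i) / n)"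
  proof (rule prod_mono)
    fix i assume "i \<in> {0..<r}"
    have "real n * (a + real i) \<le> (1 + real i) * (a * real n + real i)"
    proof -
      have "real n * i \<le> a * n * i" using a n by (simp add: mult_right_mono)
      moreover have "0 \<le> real i + real i * real i" by simp
      moreover have "real n * (a + real i) = a * real n + real n * real i" "(1 + real i) * (a * real n + real i) = a * real n + real i + real i * real i + a * real n * real i"
        by (simp_all add: algebra_simps)
      ultimately show ?thesis by (smt (verit))
    qed
    then have h: "(a + real i) \<le> (1 + real i) * (a * real n + real i) / real n"
      using n by (simp add: pos_le_divide_eq mult.commute)
    have d: "0 < a * real n + real i" using X by simp
    have "(a + real i) / (a * real n + real i) \<le> (1 + real i) / real n"
      using h by (simp add: pos_divide_le_eq[OF d] times_divide_eq_left)
    moreover have "0 \<le> (a + real i) / (a * real n + real i)" using a d by simp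
    ultimately show "0 \<le> (a + real i) / (a * real n + real i) \<and> (a + real i) / (a * real n + real i) \<le> (1 + real i) / real n"
      by simp
  qed
  also have "\<dots> = pochhammer 1 r / real n ^ r"
    by (simp add: pochhammer_prod prod_dividef add.commute)
  also have "\<dots> = fact r / real n ^ r" by (simp add: pochhammer_fact)
  finally show "pochhammer a r / pochhammer (a * n) r \<le> fact r / real n ^ r" .
qed

lemma var_bound:
  fixes A2 A3 A4 B :: real and n k :: nat
  assumes n: "n \<ge> 1" and k: "k \<ge> 1"
    and A2: "0 \<le> A2" "A2 \<le> 2 * real (k*n)^2 / real n^2"
    and A3: "A3 \<le> 6 * real (k*n)^3 / real n^3"
    and A4: "A4 \<le> 24 * real (k*n)^4 / real n^4"
    and B: "(real n - 1) * B \<le> real n * A2^2"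
  shows "real n * (A4 + 4 * A3 + 2 * A2) + real n * (real n - 1) * B - (real n * A2)^2 \<le> 52 * real k^4 * real n"
proof -
  have nn: "real n > 0" using n by simp
  have "real n * (real n - 1) * B \<le> real n * (real n * A2^2)"
    using B nn by (simp add: mult.assoc mult_left_mono)
  then have "real n * (A4 + 4 * A3 + 2 * A2) + real n * (real n - 1) * B - (real n * A2)^2
      \<le> real n * (A4 + 4 * A3 + 2 * A2)" by (simp add: power2_eq_square algebra_simps)
  also have "\<dots> \<le> real n * (24 * real (k*n)^4 / real n^4 + 4 * (6 * real (k*n)^3 / real n^3) + 2 * (2 * real (k*n)^2 / real n^2))"
    using A2 A3 A4 nn by (intro mult_left_mono add_mono) auto
  also have "\<dots> = 24 * real k^4 * n + 24 * real k^3 * n + 4 * real k^2 * n"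
    using nn by (simp add: field_simps power2_eq_square power3_eq_cube eval_nat_numeral)
  also have "\<dots> \<le> 24 * real k^4 * n + 24 * real k^4 * n + 4 * real k^4 * n"
  proof -
    have "real k^3 \<le> real k^4" "real k^2 \<le> real k^4" using k by (auto intro!: power_increasing)
    then show ?thesis using nn by (intro add_mono mult_right_mono mult_left_mono) auto
  qed
  finally show ?thesis by (simp add: mult_ac)
qed

lemma cheb:
  fixes \<omega> T :: "'a \<Rightarrow> real"
  assumes fin: "finite \<Omega>" and nonneg: "\<And>f. f \<in> \<Omega> \<Longrightarrow> \<omega> f \<ge> 0" and tot: "(\<Sum>f\<in>\<Omega>. \<omega> f * 1) = 1"
    and \<delta>: "\<delta> > 0"
  shows "(\<Sum>f\<in>\<Omega>. \<omega> f * (if \<bar>T f - (\<Sum>g\<in>\<Omega>. \<omega> g * T g)\<bar> \<ge> \<delta> then 1 else 0))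
       \<le> ((\<Sum>f\<in>\<Omega>. \<omega> f * (T f)^2) - (\<Sum>g\<in>\<Omega>. \<omega> g * T g)^2) / \<delta>^2"
proof -
  define \<mu> where "\<mu> = (\<Sum>g\<in>\<Omega>. \<omega> g * T g)"
  have "(\<Sum>f\<in>\<Omega>. \<omega> f * (if \<bar>T f - \<mu>\<bar> \<ge> \<delta> then 1 else 0)) \<le> (\<Sum>f\<in>\<Omega>. \<omega> f * ((T f - \<mu>)^2 / \<delta>^2))"
  proof (rule sum_mono)
    fix f assume f: "f \<in> \<Omega>"
    have "(if \<bar>T f - \<mu>\<bar> \<ge> \<delta> then 1 else 0) \<le> (T f - \<mu>)^2 / \<delta>^2"
    proof (cases "\<bar>T f - \<mu>\<bar> \<ge> \<delta>")
      case True
      then have "\<delta>^2 \<le> \<bar>T f - \<mu>\<bar>^2" using \<delta> by (intro power_mono) auto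
      then show ?thesis using True \<delta> by simp
    qed simp
    then show "\<omega> f * (if \<bar>T f - \<mu>\<bar> \<ge> \<delta> then 1 else 0) \<le> \<omega> f * ((T f - \<mu>)^2 / \<delta>^2)"
      using nonneg[OF f] by (rule mult_left_mono)
  qed
  also have "\<dots> = (\<Sum>f\<in>\<Omega>. \<omega> f * (T f)^2 - 2 * \<mu> * (\<omega> f * T f) + \<mu>^2 * (\<omega> f * 1)) / \<delta>^2"
    by (simp add: sum_divide_distrib power2_eq_square algebra_simps)
  also have "\<dots> = ((\<Sum>f\<in>\<Omega>. \<omega> f * (T f)^2) - \<mu>^2) / \<delta>^2"
    using tot by (simp add: sum.distrib sum_subtractf sum_distrib_left[symmetric] \<mu>_def[symmetric] power2_eq_square)
  finally show ?thesis unfolding \<mu>_def .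
qed

lemma delta_lb:
  fixes a :: real and n k :: nat
  assumes n: "n \<ge> 2" and k: "k \<ge> 1" and a: "a \<ge> 1"
  shows "real n * (pochhammer a 2 * F2 (real (k*n)) / pochhammer (a*n) 2) - real n * (F2 (real (k*n)) / real n^2)
     \<ge> real k^2 * n / (8*a)"
proof -
  define m where "m = real (k*n)"
  have nn: "real n \<ge> 2" using n by simp
  have m2: "m \<ge> 2" using n k unfolding m_def
    by (metis mult_le_mono numeral_le_real_of_nat_iff mult_1 of_nat_mult nn of_nat_le_iff)
  have "real n * (pochhammer a 2 * F2 m / pochhammer (a*n) 2) - real n * (F2 m / real n^2)
      = F2 m * (real n - 1) / (real n * (a * n + 1))"
  proof -
    have q: "a > 0" "real n > 0" using nn a by auto
    then have q2: "a * real n + 1 > 0" by (simp add: add_pos_pos)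
    note q = q q2
    have r: "pochhammer a 2 / pochhammer (a*n) 2 = (a+1)/(a*n+1)/real n"
    proof -
      have "a * real n * (a * real n + 1) = a * ((a * real n + 1) * real n)" by (simp add: algebra_simps)
      then show ?thesis unfolding p2 using q by (simp add: nonzero_mult_divide_mult_cancel_left divide_divide_eq_left)
    qed
    have "real n * (pochhammer a 2 * F2 m / pochhammer (a*n) 2) = real n * F2 m * (pochhammer a 2 / pochhammer (a*n) 2)"
      by simp
    also have "\<dots> = F2 m * (a+1) / (a*n+1)" unfolding r using q by simp
    finally have e: "real n * (pochhammer a 2 * F2 m / pochhammer (a*n) 2) = F2 m * (a+1) / (a*n+1)" .
    have e2: "real n * (F2 m / real n^2) = F2 m / real n" using q by (simp add: power2_eq_square)
    have "F2 m * (a+1) / (a*n+1) - F2 m / real n = F2 m * ((a+1) * real n - (a*n+1)) / ((a*n+1) * real n)"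
      using q by (simp add: diff_frac_eq right_diff_distrib)
    also have "\<dots> = F2 m * (real n - 1) / (real n * (a * n + 1))"
      by (simp add: algebra_simps)
    finally show ?thesis unfolding e e2 .
  qed
  also have "\<dots> \<ge> (m^2/2) * (real n / 2) / (real n * (2 * a * n))"
  proof (rule frac_le)
    show "0 \<le> F2 m * (real n - 1)" using m2 nn unfolding F2_def by simp
    have "2 * m \<le> m * m" using m2 by (intro mult_right_mono) auto
    then have "m^2/2 \<le> F2 m" unfolding F2_def by (simp add: power2_eq_square algebra_simps)
    moreover have "real n / 2 \<le> real n - 1" using nn by simp
    ultimately show "m^2/2 * (real n / 2) \<le> F2 m * (real n - 1)"
      using nn m2 by (intro mult_mono) (auto simp: F2_def)
    show "0 < real n * (a * real n + 1)" using nn a by (intro mult_pos_pos add_pos_pos) auto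
    have "1 \<le> a * real n" using nn a by (metis mult_mono' one_le_numeral order_trans mult_1 zero_le_one)
    then have "a * real n + 1 \<le> 2 * a * n" by simp
    then show "real n * (a * real n + 1) \<le> real n * (2 * a * real n)" using nn by simp
  qed
  also have "(m^2/2) * (real n / 2) / (real n * (2 * a * n)) = real k^2 * n / (8*a)"
    using nn a unfolding m_def by (simp add: field_simps power2_eq_square)
  finally show ?thesis unfolding m_def .
qed

lemma final_arith:
  fixes a Vp Vq \<Delta> :: real and n k :: nat
  assumes n: "n \<ge> 2" and k: "k \<ge> 1" and a: "a \<ge> 1"
    and D: "\<Delta> \<ge> real k^2 * n / (8*a)"
    and Vp: "Vp \<le> 52 * real k^4 * n" and Vq: "Vq \<le> 52 * real k^4 * n"
  shows "1 - (Vp + Vq) / (\<Delta>/2)^2 \<ge> 1 - 26624 * a^2 / n"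
proof -
  have nn: "real n > 0" using n by simp
  have kk: "real k > 0" using k by simp
  have pos: "real k^2 * n / (16*a) > 0" using nn a kk by simp
  have Dp: "\<Delta> > 0" using D pos a by (smt (verit) divide_pos_pos kk mult_pos_pos nn zero_less_power)
  have D2: "\<Delta>/2 \<ge> real k^2 * n / (16*a)" using D a by (simp add: field_simps)
  have "(Vp + Vq) / (\<Delta>/2)^2 \<le> (104 * real k^4 * n) / (\<Delta>/2)^2"
    using Vp Vq by (intro divide_right_mono) auto
  also have "\<dots> \<le> (104 * real k^4 * n) / (real k^2 * n / (16*a))^2"
    using pos D2 nn Dp kk by (intro divide_left_mono power_mono mult_pos_pos) auto
  also have "\<dots> = 26624 * a^2 / n"
    using nn a k by (simp add: field_simps power2_eq_square eval_nat_numeral)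
  finally show ?thesis by simp
qed

lemma abs_diff_le1:
  fixes p q :: "'a \<Rightarrow> real"
  assumes "finite \<Omega>" "\<And>x. x \<in> \<Omega> \<Longrightarrow> p x \<ge> 0" "\<And>x. x \<in> \<Omega> \<Longrightarrow> q x \<ge> 0"
    "sum p \<Omega> = 1" "sum q \<Omega> = 1" "B \<subseteq> \<Omega>"
  shows "\<bar>sum p B - sum q B\<bar> \<le> 1"
proof -
  have "sum p B \<le> sum p \<Omega>" "sum q B \<le> sum q \<Omega>"
    using assms by (intro sum_mono2; auto)+
  moreover have "sum p B \<ge> 0" "sum q B \<ge> 0"
    using assms by (auto intro!: sum_nonneg)
  ultimately show ?thesis using assms by linarith
qed

lemma sum_filter_ind:
  fixes g :: "'a \<Rightarrow> real"
  assumes "finite A"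
  shows "sum g {x\<in>A. P x} = (\<Sum>x\<in>A. g x * (if P x then 1 else 0))"
proof -
  have "sum g {x\<in>A. P x} = (\<Sum>x\<in>A. if P x then g x else 0)"
    using assms by (rule sum.inter_filter)
  also have "\<dots> = (\<Sum>x\<in>A. g x * (if P x then 1 else 0))"
    by (rule sum.cong) auto
  finally show ?thesis .
qed

lemma tv_main:
  fixes a :: real and n k :: nat
  assumes n: "n \<ge> 2" and k: "k \<ge> 1" and a: "a \<ge> 1"
  shows "1 - 26624 * a^2 / n \<le> dTV n k a" "dTV n k a \<le> 1"
proof -
  define S where "S = S0 n k"
  have fin: "finite S" by (simp add: S_def)
  have n1: "n \<ge> 1" using n by simp
  have apos: "a > 0" using a by simp
  have cS: "card S = k * n" by (simp add: S_def card_S0)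
  have Xpos: "a * real n > 0" using apos n1 by simp
  let ?\<Omega> = "S \<rightarrow>\<^sub>E {1..n}"
  let ?wp = "\<lambda>f. W S n a f / pochhammer (a*n) (card S)"
  let ?wq = "\<lambda>f::nat\<times>nat\<Rightarrow>nat. 1 / real n ^ card S"
  let ?T = "Tst S n"
  define A2p where "A2p = pochhammer a 2 * F2 (card S) / pochhammer (a*n) 2"
  define A3p where "A3p = pochhammer a 3 * F3 (card S) / pochhammer (a*n) 3"
  define A4p where "A4p = pochhammer a 4 * F4 (card S) / pochhammer (a*n) 4"
  define Bp where "Bp = pochhammer a 2 * pochhammer a 2 * F4 (card S) / pochhammer (a*n) 4"
  define A2q where "A2q = F2 (card S) / real n ^ 2"
  define A3q where "A3q = F3 (card S) / real n ^ 3"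
  define A4q where "A4q = F4 (card S) / real n ^ 4"
  define Bq where "Bq = F4 (card S) / real n ^ 4"
  note mp = moments[OF polF2[OF fin n1 apos] polF3[OF fin n1 apos] polF4[OF fin n1 apos] polF22[OF fin n1 apos]]
  have mp1: "(\<Sum>f\<in>?\<Omega>. ?wp f * ?T f) = n * A2p"
    using mp(1) unfolding A2p_def .
  have mp2: "(\<Sum>f\<in>?\<Omega>. ?wp f * (?T f)^2) = n * (A4p + 4 * A3p + 2 * A2p) + n * (real n - 1) * Bp"
    using mp(2) unfolding A2p_def A3p_def A4p_def Bp_def .
  note mq = moments[OF unifF2[OF fin n1] unifF3[OF fin n1] unifF4[OF fin n1] unifF22[OF fin n1]]
  have mq1: "(\<Sum>f\<in>?\<Omega>. ?wq f * ?T f) = n * A2q"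
    using mq(1) unfolding A2q_def .
  have mq2: "(\<Sum>f\<in>?\<Omega>. ?wq f * (?T f)^2) = n * (A4q + 4 * A3q + 2 * A2q) + n * (real n - 1) * Bq"
    using mq(2) unfolding A2q_def A3q_def A4q_def Bq_def .
  have tp: "(\<Sum>f\<in>?\<Omega>. ?wp f * 1) = 1" by (rule pol1[OF fin n1 apos])
  have tq: "(\<Sum>f\<in>?\<Omega>. ?wq f * 1) = 1" by (rule unif1[OF fin n1])
  have wp_nn: "?wp f \<ge> 0" for f
    using Xpos apos unfolding W_def
    by (intro divide_nonneg_pos prod_nonneg pochhammer_nonneg pochhammer_pos) auto
  have wq_nn: "?wq f \<ge> 0" for f by simp
  define Vp where "Vp = (\<Sum>f\<in>?\<Omega>. ?wp f * (?T f)^2) - (\<Sum>f\<in>?\<Omega>. ?wp f * ?T f)^2"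
  define Vq where "Vq = (\<Sum>f\<in>?\<Omega>. ?wq f * (?T f)^2) - (\<Sum>f\<in>?\<Omega>. ?wq f * ?T f)^2"
  have Fb: "0 \<le> F2 (card S)" "F2 (card S) \<le> real (k*n) ^ 2" "0 \<le> F3 (card S)" "F3 (card S) \<le> real (k*n) ^ 3"
    "0 \<le> F4 (card S)" "F4 (card S) \<le> real (k*n) ^ 4" "F4 (card S) \<le> F2 (card S) ^ 2"
    using F_bounds[of "card S"] unfolding cS by auto
  have rb: "0 \<le> pochhammer a r / pochhammer (a * n) r" "pochhammer a r / pochhammer (a * n) r \<le> fact r / real n ^ r" for r
    using ar_bound[OF a n1] by auto
  have nn: "real n \<ge> 2" using n by simp
  have Ab: "A \<le> c / real n ^ r * real (k*n) ^ r"
    if "A = pochhammer a r / pochhammer (a * n) r * F" "0 \<le> F" "F \<le> real (k*n) ^ r" "fact r \<le> c" for A F c r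
  proof -
    have "A \<le> fact r / real n ^ r * real (k*n) ^ r"
      unfolding that(1) using rb[of r] that(2,3) by (intro mult_mono) auto
    also have "\<dots> \<le> c / real n ^ r * real (k*n) ^ r"
      using that(4) nn by (intro mult_right_mono divide_right_mono) auto
    finally show ?thesis .
  qed
  have "Vp \<le> 52 * real k^4 * n"
  proof -
    have "Vp = real n * (A4p + 4 * A3p + 2 * A2p) + real n * (real n - 1) * Bp - (real n * A2p)^2"
      unfolding Vp_def mp1 mp2 by simp
    also have "\<dots> \<le> 52 * real k^4 * n"
    proof (rule var_bound[OF n1 k])
      have "A2p = pochhammer a 2 / pochhammer (a*n) 2 * F2 (card S)" unfolding A2p_def by simp
      then show "0 \<le> A2p" using rb[of 2] Fb(1) by (metis mult_nonneg_nonneg)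
      show "A2p \<le> 2 * real (k * n)^2 / real n^2"
        using Ab[of A2p 2 "F2 (card S)" 2] Fb unfolding A2p_def by simp
      show "A3p \<le> 6 * real (k * n)^3 / real n^3"
        using Ab[of A3p 3 "F3 (card S)" 6] Fb unfolding A3p_def by (simp add: fact_numeral)
      show "A4p \<le> 24 * real (k * n)^4 / real n^4"
        using Ab[of A4p 4 "F4 (card S)" 24] Fb unfolding A4p_def by (simp add: fact_numeral)
      show "(real n - 1) * Bp \<le> real n * A2p^2"
      proof -
        define X where "X = a * real n"
        have X0: "X > 0" using Xpos X_def by simp
        have pp: "pochhammer a 2 \<ge> 0" using apos by (simp add: pochhammer_nonneg)
        have "(real n - 1) * (X*(X+1)) \<le> real n * ((X+2)*(X+3))"
          using nn X0 by (intro mult_mono) auto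
        then have "(real n - 1) * (X*(X+1)) * (X*(X+1)) \<le> real n * ((X+2)*(X+3)) * (X*(X+1))"
          using X0 by (intro mult_right_mono) auto
        then have c: "(real n - 1) * (pochhammer X 2)^2 \<le> real n * pochhammer X 4"
          unfolding p2 p4 by (simp add: power2_eq_square mult_ac)
        have P2: "pochhammer X 2 > 0" "pochhammer X 4 > 0" using X0 by (auto intro!: pochhammer_pos)
        have key: "(real n - 1) / pochhammer X 4 \<le> real n / (pochhammer X 2)^2"
        proof -
          have "(real n - 1) / pochhammer X 4 = ((real n - 1) * (pochhammer X 2)^2) / (pochhammer X 4 * (pochhammer X 2)^2)"
            using P2 by simp
          also have "\<dots> \<le> (real n * pochhammer X 4) / (pochhammer X 4 * (pochhammer X 2)^2)"
            using c P2 by (intro divide_right_mono) auto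
          also have "\<dots> = real n / (pochhammer X 2)^2" using P2 by simp
          finally show ?thesis .
        qed
        have "(real n - 1) * Bp = (pochhammer a 2)^2 * F4 (card S) * ((real n - 1) / pochhammer X 4)"
          unfolding Bp_def X_def by (simp add: power2_eq_square)
        also have "\<dots> \<le> (pochhammer a 2)^2 * F2 (card S)^2 * (real n / (pochhammer X 2)^2)"
          using Fb pp key nn P2 by (intro mult_mono) auto
        also have "\<dots> = real n * A2p^2"
          unfolding A2p_def X_def by (simp add: power2_eq_square)
        finally show ?thesis .
      qed
    qed
    finally show ?thesis .
  qed
  note Vp_le = this
  have "Vq \<le> 52 * real k^4 * n"
  proof -
    have "Vq = real n * (A4q + 4 * A3q + 2 * A2q) + real n * (real n - 1) * Bq - (real n * A2q)^2"
      unfolding Vq_def mq1 mq2 by simp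
    also have "\<dots> \<le> 52 * real k^4 * n"
    proof (rule var_bound[OF n1 k])
      show "0 \<le> A2q" unfolding A2q_def using Fb by simp
      show "A2q \<le> 2 * real (k * n)^2 / real n^2"
        unfolding A2q_def using Fb nn by (intro divide_right_mono) auto
      show "A3q \<le> 6 * real (k * n)^3 / real n^3"
        unfolding A3q_def using Fb nn by (intro divide_right_mono) auto
      show "A4q \<le> 24 * real (k * n)^4 / real n^4"
        unfolding A4q_def using Fb nn by (intro divide_right_mono) auto
      show "(real n - 1) * Bq \<le> real n * A2q^2"
      proof -
        have "(real n - 1) * F4 (card S) \<le> real n * F2 (card S)^2"
          using Fb nn by (intro mult_mono) auto
        then have "((real n - 1) * F4 (card S)) / real n ^ 4 \<le> (real n * F2 (card S)^2) / real n ^ 4"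
          using nn by (intro divide_right_mono) auto
        moreover have "real n * (F2 (card S) / real n ^ 2)^2 = (real n * F2 (card S)^2) / real n ^ 4"
          by (simp add: power_divide power2_eq_square eval_nat_numeral)
        ultimately show ?thesis unfolding Bq_def A2q_def by simp
      qed
    qed
    finally show ?thesis .
  qed
  note Vq_le = this
  define \<Delta> where "\<Delta> = n * A2p - n * A2q"
  have D: "\<Delta> \<ge> real k^2 * n / (8*a)"
    unfolding \<Delta>_def A2p_def A2q_def cS by (rule delta_lb[OF n k a])
  have "real k^2 * n / (8*a) > 0" using k apos nn by simp
  then have Dpos: "\<Delta> > 0" using D by linarith
  define \<delta> where "\<delta> = \<Delta> / 2"
  have \<delta>pos: "\<delta> > 0" using Dpos by (simp add: \<delta>_def)
  define \<theta> where "\<theta> = (n * A2p + n * A2q) / 2"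
  define ind where "ind = (\<lambda>f. if \<theta> \<le> ?T f then (1::real) else 0)"
  have fO: "finite ?\<Omega>" using fin by (simp add: finite_PiE)
  have wp_nn': "\<And>f. f \<in> ?\<Omega> \<Longrightarrow> ?wp f \<ge> 0" using wp_nn by blast
  have wq_nn': "\<And>f. f \<in> ?\<Omega> \<Longrightarrow> ?wq f \<ge> 0" using wq_nn by blast
  have chp: "(\<Sum>f\<in>?\<Omega>. ?wp f * (if \<bar>?T f - n * A2p\<bar> \<ge> \<delta> then 1 else 0)) \<le> Vp / \<delta>^2"
    using cheb[OF fO wp_nn' tp \<delta>pos, where T="?T"] unfolding Vp_def mp1 .
  have chq: "(\<Sum>f\<in>?\<Omega>. ?wq f * (if \<bar>?T f - n * A2q\<bar> \<ge> \<delta> then 1 else 0)) \<le> Vq / \<delta>^2"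
    using cheb[OF fO wq_nn' tq \<delta>pos, where T="?T"] unfolding Vq_def mq1 .
  have Pp: "(\<Sum>f\<in>?\<Omega>. ?wp f * ind f) \<ge> 1 - Vp / \<delta>^2"
  proof -
    have "(\<Sum>f\<in>?\<Omega>. ?wp f * ind f) = (\<Sum>f\<in>?\<Omega>. ?wp f * 1) - (\<Sum>f\<in>?\<Omega>. ?wp f * (1 - ind f))"
      unfolding sum_subtractf[symmetric] by (rule sum.cong) (simp_all add: right_diff_distrib)
    moreover have "(\<Sum>f\<in>?\<Omega>. ?wp f * (1 - ind f)) \<le> (\<Sum>f\<in>?\<Omega>. ?wp f * (if \<bar>?T f - n * A2p\<bar> \<ge> \<delta> then 1 else 0))"
    proof (rule sum_mono)
      fix f
      have "1 - ind f \<le> (if \<bar>?T f - n * A2p\<bar> \<ge> \<delta> then 1 else 0)"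
        using Dpos unfolding ind_def \<theta>_def \<delta>_def \<Delta>_def by (auto simp: abs_if algebra_simps)
      then show "?wp f * (1 - ind f) \<le> ?wp f * (if \<bar>?T f - n * A2p\<bar> \<ge> \<delta> then 1 else 0)"
        using wp_nn[of f] by (rule mult_left_mono)
    qed
    ultimately show ?thesis using tp chp by linarith
  qed
  have Pq: "(\<Sum>f\<in>?\<Omega>. ?wq f * ind f) \<le> Vq / \<delta>^2"
  proof -
    have "(\<Sum>f\<in>?\<Omega>. ?wq f * ind f) \<le> (\<Sum>f\<in>?\<Omega>. ?wq f * (if \<bar>?T f - n * A2q\<bar> \<ge> \<delta> then 1 else 0))"
    proof (rule sum_mono)
      fix f
      have "ind f \<le> (if \<bar>?T f - n * A2q\<bar> \<ge> \<delta> then 1 else 0)"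
        using Dpos unfolding ind_def \<theta>_def \<delta>_def \<Delta>_def by (auto simp: abs_if algebra_simps)
      then show "?wq f * ind f \<le> ?wq f * (if \<bar>?T f - n * A2q\<bar> \<ge> \<delta> then 1 else 0)"
        using wq_nn by (rule mult_left_mono)
    qed
    then show ?thesis using chq by linarith
  qed
  define A where "A = {M \<in> kout_maps n k. \<theta> \<le> ?T (phi n k M)}"
  have sA: "A \<subseteq> kout_maps n k" by (auto simp: A_def)
  have pa: "prob_alpha n k a M = ?wp (phi n k M)" for M
    by (simp add: prob_alpha_phi S_def)
  have pu: "prob_unif n k M = ?wq (phi n k M)" for M
    by (simp add: prob_unif_def cS)
  have sumAp: "sum (prob_alpha n k a) A = (\<Sum>f\<in>?\<Omega>. ?wp f * ind f)"
    unfolding A_def sum_filter_ind[OF finite_kout] pa ind_def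
    using transfer_sum[of "\<lambda>f. ?wp f * (if \<theta> \<le> ?T f then 1 else 0)" n k] by (simp add: S_def)
  have sumAq: "sum (prob_unif n k) A = (\<Sum>f\<in>?\<Omega>. ?wq f * ind f)"
    unfolding A_def sum_filter_ind[OF finite_kout] pu ind_def
    using transfer_sum[of "\<lambda>f. ?wq f * (if \<theta> \<le> ?T f then 1 else 0)" n k] by (simp add: S_def)
  have totp: "sum (prob_alpha n k a) (kout_maps n k) = 1"
    unfolding pa using transfer_sum[of "\<lambda>f. ?wp f * 1" n k] tp by (simp add: S_def)
  have totq: "sum (prob_unif n k) (kout_maps n k) = 1"
  proof -
    have "sum (prob_unif n k) (kout_maps n k) = (\<Sum>M\<in>kout_maps n k. ?wq (phi n k M) * 1)"
      by (rule sum.cong) (simp_all add: pu)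
    also have "\<dots> = (\<Sum>f\<in>?\<Omega>. ?wq f * 1)"
      by (rule transfer_sum[of "\<lambda>f. ?wq f * 1" n k, folded S_def])
    finally show ?thesis using tq by simp
  qed
  have bnd: "\<bar>sum (prob_alpha n k a) B - sum (prob_unif n k) B\<bar> \<le> 1" if "B \<subseteq> kout_maps n k" for B
    by (rule abs_diff_le1[OF finite_kout _ _ totp totq that]) (simp_all add: pa pu wp_nn)
  let ?Set = "{\<bar>(\<Sum>M\<in>B. prob_alpha n k a M) - (\<Sum>M\<in>B. prob_unif n k M)\<bar> | B. B \<subseteq> kout_maps n k}"
  have bdd: "bdd_above ?Set" by (rule bdd_aboveI[of _ 1]) (use bnd in auto)
  have "1 - 26624 * a^2 / n \<le> 1 - (Vp + Vq) / (\<Delta>/2)^2"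
    by (rule final_arith[OF n k a D Vp_le Vq_le])
  also have "\<dots> \<le> sum (prob_alpha n k a) A - sum (prob_unif n k) A"
    unfolding sumAp sumAq using Pp Pq by (simp add: \<delta>_def add_divide_distrib)
  also have "\<dots> \<le> \<bar>sum (prob_alpha n k a) A - sum (prob_unif n k) A\<bar>" by simp
  also have "\<dots> \<le> dTV n k a"
    unfolding dTV_def by (rule cSup_upper[OF _ bdd]) (use sA in blast)
  finally show "1 - 26624 * a^2 / n \<le> dTV n k a" .
  show "dTV n k a \<le> 1"
    unfolding dTV_def by (rule cSup_least) (use bnd in auto)
qed

theorem theorem1:
  fixes k :: nat and \<alpha> :: "nat \<Rightarrow> real"
  assumes "k \<ge> 1"
    and "\<And>n. \<alpha> n > 0"
    and "filterlim \<alpha> at_top sequentially"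
    and "(\<lambda>n. \<alpha> n / sqrt (real n)) \<longlonglongrightarrow> 0"
  shows "(\<lambda>n. dTV n k (\<alpha> n)) \<longlonglongrightarrow> 1"
proof (rule tendsto_sandwich[where f = "\<lambda>n. 1 - 26624 * (\<alpha> n / sqrt (real n))^2" and h = "\<lambda>n. 1"])
  have ev1: "\<forall>\<^sub>F n in sequentially. \<alpha> n \<ge> 1"
    using assms(3) by (simp add: filterlim_at_top)
  have ev2: "\<forall>\<^sub>F n in sequentially. n \<ge> (2::nat)"
    by (rule eventually_ge_at_top)
  show "\<forall>\<^sub>F n in sequentially. 1 - 26624 * (\<alpha> n / sqrt (real n))^2 \<le> dTV n k (\<alpha> n)"
    using ev1 ev2
  proof eventually_elim
    case (elim n)
    have "(\<alpha> n / sqrt (real n))^2 = \<alpha> n ^ 2 / real n"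
      by (simp add: power_divide)
    then show ?case using tv_main(1)[OF elim(2) assms(1) elim(1)] by simp
  qed
  show "\<forall>\<^sub>F n in sequentially. dTV n k (\<alpha> n) \<le> 1"
    using ev1 ev2
  proof eventually_elim
    case (elim n)
    then show ?case using tv_main(2)[OF elim(2) assms(1) elim(1)] by simp
  qed
  have "(\<lambda>n. 1 - 26624 * (\<alpha> n / sqrt (real n))^2) \<longlonglongrightarrow> 1 - 26624 * 0^2"
    by (intro tendsto_intros assms(4))
  then show "(\<lambda>n. 1 - 26624 * (\<alpha> n / sqrt (real n))^2) \<longlonglongrightarrow> 1" by simp
  show "(\<lambda>n. 1::real) \<longlonglongrightarrow> 1" by simp
qed


end
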